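(* Let $W^\pm=(\alpha_1^\pm,\rho_1^\pm,\rho_2^\pm,u_1^\pm,u_2^\pm)$ with $\alpha_1^\pm\in(0,1)$, $\rho_i^\pm>0$, and $S\in\mathbb{R}$ satisfy the Rankine–Hugoniot conditions \begin{align*} &[\![\alpha_1\rho u]\!]=S[\![\alpha_1\rho]\!],\quad [\![\alpha_1\rho_1u_1]\!]=S[\![\alpha_1\rho_1]\!],\quad [\![\rho u]\!]=S[\![\rho]\!],\\ &[\![\alpha_1\rho_1u_1^2+\alpha_2\rho_2u_2^2+\alpha_1p_1+\alpha_2p_2]\!]=S[\![\alpha_1\rho_1u_1+\alpha_2\rho_2u_2]\!],\quad [\![\tfrac12(u_1^2-u_2^2)+\Psi_1-\Psi_2]\!]=S[\![u_1-u_2]\!], \end{align*} and assume $Q:=-\rho^-(u^--S)<0$. Let $\nu\in\{1,2\}$, assume $\rho\mapsto\rho\,a_\nu(\rho)$ is strictly increasing on $(0,\infty)$, and assume $\rho_\nu^-<\rho_\nu^+$. Let $D$ be the energy dissipation \[ D=\sum_{i=1}^2\Big(-S\,[\![\alpha_i\rho_i(\varphi_i+\tfrac12u_i^2)]\!]+[\![\alpha_i\rho_iu_i(\Psi_i+\tfrac12u_i^2)]\!]\Big). \] (a) If $S=u_\nu^+-a_\nu(\rho_\nu^+)$ (the characteristic speed $u_\nu-a_\nu$ on the right coincides with the discontinuity), then $D<0$, i.e. the energy admissibility condition $D\le0$ holds. (b) If $S=u_\nu^--a_\nu(\rho_\nu^-)$ (the characteristic speed $u_\nu-a_\nu$ on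 the left coincides with the discontinuity), then $D>0$, i.e. the energy admissibility condition is violated.
   Context: For $i=1,2$, $p_i:(0,\infty)\to\mathbb{R}$ is smooth with $p_i'>0$, $a_i(\rho)=\sqrt{p_i'(\rho)}$; $\varphi_i$ is an antiderivative of $\rho\mapsto p_i(\rho)/\rho^2$ and $\Psi_i(\rho)=\varphi_i(\rho)+p_i(\rho)/\rho$. For a state: $\alpha_2=1-\alpha_1$, $\rho=\alpha_1\rho_1+\alpha_2\rho_2$, $c_i=\alpha_i\rho_i/\rho$, $u=c_1u_1+c_2u_2$, $p_i=p_i(\rho_i)$, $\varphi_i=\varphi_i(\rho_i)$, $\Psi_i=\Psi_i(\rho_i)$. $[\![f]\!]=f(W^+)-f(W^-)$. This concerns a shock of one phase lying inside a rarefaction fan of phase $\nu$ of the one-dimensional barotropic conservative SHTC two-phase system, the admissibility criterion being $D\le0$. *)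

theory Defs
  imports "HOL-Analysis.Analysis"
begin

type_synonym state = "real \<times> real \<times> real \<times> real \<times> real"

definition smooth_on :: "real set \<Rightarrow> (real \<Rightarrow> real) \<Rightarrow> bool" where
  "smooth_on A f \<longleftrightarrow> (\<forall>k x. x \<in> A \<longrightarrow> ((deriv ^^ k) f) differentiable (at x))"

definition alph :: "state \<Rightarrow> nat \<Rightarrow> real" where
  "alph W i = (case W of (a1, r1, r2, v1, v2) \<Rightarrow> if i = 1 then a1 else 1 - a1)"

definition rh :: "state \<Rightarrow> nat \<Rightarrow> real" where
  "rh W i = (case W of (a1, r1, r2, v1, v2) \<Rightarrow> if i = 1 then r1 else r2)"

definition vel :: "state \<Rightarrow> nat \<Rightarrow> real" where
  "vel W i = (case W of (a1, r1, r2, v1, v2) \<Rightarrow> if i = 1 then v1 else v2)"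

definition rho :: "state \<Rightarrow> real" where
  "rho W = alph W 1 * rh W 1 + alph W 2 * rh W 2"

definition cfrac :: "state \<Rightarrow> nat \<Rightarrow> real" where
  "cfrac W i = alph W i * rh W i / rho W"

definition umix :: "state \<Rightarrow> real" where
  "umix W = cfrac W 1 * vel W 1 + cfrac W 2 * vel W 2"

definition sound :: "(nat \<Rightarrow> real \<Rightarrow> real) \<Rightarrow> nat \<Rightarrow> real \<Rightarrow> real" where
  "sound p i r = sqrt (deriv (p i) r)"

definition Psi :: "(nat \<Rightarrow> real \<Rightarrow> real) \<Rightarrow> (nat \<Rightarrow> real \<Rightarrow> real) \<Rightarrow> nat \<Rightarrow> real \<Rightarrow> real" where
  "Psi p \<phi> i r = \<phi> i r + p i r / r"

definition jump :: "(state \<Rightarrow> real) \<Rightarrow> state \<Rightarrow> state \<Rightarrow> real" where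
  "jump f Wm Wp = f Wp - f Wm"

definition dissip :: "(nat \<Rightarrow> real \<Rightarrow> real) \<Rightarrow> (nat \<Rightarrow> real \<Rightarrow> real) \<Rightarrow> real \<Rightarrow> state \<Rightarrow> state \<Rightarrow> real" where
  "dissip p \<phi> S Wm Wp = (\<Sum>i\<in>{1,2::nat}.
      - S * jump (\<lambda>W. alph W i * rh W i * (\<phi> i (rh W i) + vel W i ^ 2 / 2)) Wm Wp
      + jump (\<lambda>W. alph W i * rh W i * vel W i * (Psi p \<phi> i (rh W i) + vel W i ^ 2 / 2)) Wm Wp)"

end

theory Submission
  imports Defs
begin

lemma alg:
  fixes a r1 r2 s1 s2 v1 v2 y1 y2 S P1m P2m P1p P2p F1m F2m F1p F2p :: real
  assumes pos: "r1 > 0" "r2 > 0" "s1 > 0" "s2 > 0"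
  and h1: "r1 * (v1-S) = s1 * (y1-S)" and h2: "r2 * (v2-S) = s2 * (y2-S)"
  and h4: "a * (s1 * y1^2 - r1 * v1^2) + (1-a) * (s2 * y2^2 - r2 * v2^2) + a * (P1p-P1m) + (1-a) * (P2p-P2m)
           = S * (a * (s1 * y1 - r1 * v1) + (1-a) * (s2 * y2 - r2 * v2))"
  and h5: "(y1^2-y2^2)/2 + (F1p + P1p/s1) - (F2p + P2p/s2) - ((v1^2-v2^2)/2 + (F1m + P1m/r1) - (F2m + P2m/r2)) = S * ((y1-y2)-(v1-v2))"
  shows "(-S * (a * s1 * (F1p + y1^2/2) - a * r1 * (F1m+v1^2/2)) + (a * s1 * y1 * ((F1p + P1p/s1) + y1^2/2) - a * r1 * v1 * ((F1m+P1m/r1)+v1^2/2)))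
       + (-S * ((1-a) * s2 * (F2p + y2^2/2) - (1-a) * r2 * (F2m+v2^2/2)) + ((1-a) * s2 * y2 * ((F2p + P2p/s2) + y2^2/2) - (1-a) * r2 * v2 * ((F2m+P2m/r2)+v2^2/2)))
     = (a * r1 * (v1-S) + (1-a) * r2 * (v2-S))  *  (((y1-S)^2/2 + (F1p + P1p/s1)) - ((v1-S)^2/2 + (F1m + P1m/r1)))
     \<and> (((y1-S)^2/2 + (F1p + P1p/s1)) - ((v1-S)^2/2 + (F1m + P1m/r1))) = (((y2-S)^2/2 + (F2p + P2p/s2)) - ((v2-S)^2/2 + (F2m + P2m/r2)))" (is "?L = ?R \<and> _")
proof -
  define E1 where "E1 = ((y1-S)^2/2 + (F1p + P1p/s1)) - ((v1-S)^2/2 + (F1m + P1m/r1))"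
  define E2 where "E2 = ((y2-S)^2/2 + (F2p + P2p/s2)) - ((v2-S)^2/2 + (F2m + P2m/r2))"
  have e: "E1 = E2" using h5 unfolding E1_def E2_def by (simp add: power2_eq_square algebra_simps diff_divide_distrib add_divide_distrib) 
  have L1: "-S * (a * s1 * (F1p + y1^2/2) - a * r1 * (F1m+v1^2/2)) + (a * s1 * y1 * ((F1p + P1p/s1) + y1^2/2) - a * r1 * v1 * ((F1m+P1m/r1)+v1^2/2))
     = a * r1 * (v1-S) * E1 + S * a * (s1 * y1^2 - r1 * v1^2 + (P1p-P1m) - S * (s1 * y1 - r1 * v1))"
    using h1 pos unfolding E1_def by (simp add: field_simps power2_eq_square) algebra
  have L2: "-S * ((1-a) * s2 * (F2p + y2^2/2) - (1-a) * r2 * (F2m+v2^2/2)) + ((1-a) * s2 * y2 * ((F2p + P2p/s2) + y2^2/2) - (1-a) * r2 * v2 * ((F2m+P2m/r2)+v2^2/2))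
     = (1-a) * r2 * (v2-S) * E2 + S * (1-a) * (s2 * y2^2 - r2 * v2^2 + (P2p-P2m) - S * (s2 * y2 - r2 * v2))"
    using h2 pos unfolding E2_def by (simp add: field_simps power2_eq_square) algebra
  have z: "S * a * (s1 * y1^2 - r1 * v1^2 + (P1p-P1m) - S * (s1 * y1 - r1 * v1)) + S * (1-a) * (s2 * y2^2 - r2 * v2^2 + (P2p-P2m) - S * (s2 * y2 - r2 * v2)) = 0"
  proof -
    have "S * a * (s1 * y1^2 - r1 * v1^2 + (P1p-P1m) - S * (s1 * y1 - r1 * v1)) + S * (1-a) * (s2 * y2^2 - r2 * v2^2 + (P2p-P2m) - S * (s2 * y2 - r2 * v2))
      = S * ((a * (s1 * y1^2 - r1 * v1^2) + (1-a) * (s2 * y2^2 - r2 * v2^2) + a * (P1p-P1m) + (1-a) * (P2p-P2m)) - S * (a * (s1 * y1 - r1 * v1) + (1-a) * (s2 * y2 - r2 * v2)))"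
      by (simp add: algebra_simps)
    also have "... = 0" using h4 by simp
    finally show ?thesis .
  qed
  have "?L = a * r1 * (v1-S) * E1 + (1-a) * r2 * (v2-S) * E2" using L1 L2 z by linarith
  hence "?L = (a * r1 * (v1-S) + (1-a) * r2 * (v2-S)) * E1" using e by (simp add: algebra_simps)
  thus ?thesis using e unfolding E1_def E2_def by simp
qed

lemma ana:
  fixes P F P' :: "real \<Rightarrow> real" and K r0 r1 :: real
  assumes dP: "\<And>r. r > 0 \<Longrightarrow> (P has_real_derivative P' r) (at r)"
    and pP: "\<And>r. r > 0 \<Longrightarrow> P' r > 0"
    and dF: "\<And>r. r > 0 \<Longrightarrow> (F has_real_derivative P r / r^2) (at r)"
    and mono: "strict_mono_on {0<..} (\<lambda>r. r  *  sqrt (P' r))"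
    and r: "0 < r0" "r0 < r1"
  shows "K = (r1  *  sqrt (P' r1))^2 \<Longrightarrow> F r1 + P r1 / r1 + K / (2 * r1^2) < F r0 + P r0 / r0 + K / (2 * r0^2)"
    and "K = (r0  *  sqrt (P' r0))^2 \<Longrightarrow> F r1 + P r1 / r1 + K / (2 * r1^2) > F r0 + P r0 / r0 + K / (2 * r0^2)"
proof -
  define f where "f = (\<lambda>r. F r + P r / r + K / (2 * r^2))"
  have df: "(f has_real_derivative ((r  *  sqrt (P' r))^2 - K) / r^3) (at r)" if "r > 0" for r
  proof -
    have "(f has_real_derivative (P r / r^2 + (P' r  *  r - P r  *  1) / (r  *  r) + K  *  (- (2  *  (2  *  r))) / (2 * r^2  *  (2 * r^2)))) (at r)"
      unfolding f_def using that
      by (intro derivative_eq_intros) (auto simp: power2_eq_square intro: dF[OF that, unfolded power2_eq_square] dP[OF that])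
    moreover have "P r / r^2 + (P' r  *  r - P r  *  1) / (r  *  r) + K  *  (- (2  *  (2  *  r))) / (2 * r^2  *  (2 * r^2)) = ((r  *  sqrt (P' r))^2 - K) / r^3"
      using that pP[OF that] by (simp add: power_mult_distrib field_simps power2_eq_square power3_eq_cube)
    ultimately show ?thesis by simp
  qed
  obtain z where z: "r0 < z" "z < r1" "f r1 - f r0 = (r1 - r0)  *  (((z  *  sqrt (P' z))^2 - K) / z^3)"
    using MVT2[OF r(2), of f "\<lambda>r. ((r  *  sqrt (P' r))^2 - K) / r^3"] df r by force
  have zp: "z > 0" using z r by simp
  have nn: "0 \<le> z  *  sqrt (P' z)" "0 \<le> r0  *  sqrt (P' r0)" "0 \<le> r1  *  sqrt (P' r1)" using zp r pP[of z] pP[of r0] pP[of r1] by auto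
  have m1: "z  *  sqrt (P' z) < r1  *  sqrt (P' r1)" using mono z zp r unfolding strict_mono_on_def by auto
  have m0: "r0  *  sqrt (P' r0) < z  *  sqrt (P' z)" using mono z zp r unfolding strict_mono_on_def by auto
  show "K = (r1  *  sqrt (P' r1))^2 \<Longrightarrow> F r1 + P r1 / r1 + K / (2 * r1^2) < F r0 + P r0 / r0 + K / (2 * r0^2)"
  proof -
    assume K: "K = (r1  *  sqrt (P' r1))^2"
    have "(z  *  sqrt (P' z))^2 < K" unfolding K using m1 nn by (intro power_strict_mono) auto
    hence "((z  *  sqrt (P' z))^2 - K) / z^3 < 0" using zp by (simp add: divide_neg_pos)
    hence "(r1 - r0)  *  (((z  *  sqrt (P' z))^2 - K) / z^3) < 0" using z r by (intro mult_pos_neg) auto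
    hence "f r1 - f r0 < 0" using z(3) by linarith
    thus ?thesis unfolding f_def by simp
  qed
  show "K = (r0  *  sqrt (P' r0))^2 \<Longrightarrow> F r1 + P r1 / r1 + K / (2 * r1^2) > F r0 + P r0 / r0 + K / (2 * r0^2)"
  proof -
    assume K: "K = (r0  *  sqrt (P' r0))^2"
    have "K < (z  *  sqrt (P' z))^2" unfolding K using m0 nn by (intro power_strict_mono) auto
    hence "((z  *  sqrt (P' z))^2 - K) / z^3 > 0" using zp by simp
    hence "(r1 - r0)  *  (((z  *  sqrt (P' z))^2 - K) / z^3) > 0" using z r by (intro mult_pos_pos) auto
    hence "f r1 - f r0 > 0" using z(3) by linarith
    thus ?thesis unfolding f_def by simp
  qed
qed

lemma phase:
  fixes P F P' :: "real \<Rightarrow> real" and r s v y S :: real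
  assumes dP: "\<And>r. r > 0 \<Longrightarrow> (P has_real_derivative P' r) (at r)"
    and pP: "\<And>r. r > 0 \<Longrightarrow> P' r > 0"
    and dF: "\<And>r. r > 0 \<Longrightarrow> (F has_real_derivative P r / r^2) (at r)"
    and mono: "strict_mono_on {0<..} (\<lambda>r. r  *  sqrt (P' r))"
    and rs: "0 < r" "r < s"
    and h: "r * (v-S) = s * (y-S)"
  shows "S = y - sqrt (P' s) \<Longrightarrow> ((y-S)^2/2 + (F s + P s/s)) - ((v-S)^2/2 + (F r + P r/r)) < 0"
    and "S = v - sqrt (P' r) \<Longrightarrow> ((y-S)^2/2 + (F s + P s/s)) - ((v-S)^2/2 + (F r + P r/r)) > 0"
proof -
  have sp: "s > 0" using rs by simp
  show "S = y - sqrt (P' s) \<Longrightarrow> ((y-S)^2/2 + (F s + P s/s)) - ((v-S)^2/2 + (F r + P r/r)) < 0"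
  proof -
    assume S: "S = y - sqrt (P' s)"
    define K where "K = (s  *  sqrt (P' s))^2"
    have yS: "y - S = sqrt (P' s)" using S by simp
    have vS: "v - S = s  *  sqrt (P' s) / r" using h yS rs by (simp add: field_simps)
    have e1: "(y-S)^2/2 = K/(2 * s^2)" unfolding K_def yS using sp by (simp add: power_mult_distrib)
    have e2: "(v-S)^2/2 = K/(2 * r^2)" unfolding K_def vS using rs by (simp add: power_divide)
    show ?thesis using ana(1)[OF dP pP dF mono rs K_def] unfolding e1 e2 by simp
  qed
  show "S = v - sqrt (P' r) \<Longrightarrow> ((y-S)^2/2 + (F s + P s/s)) - ((v-S)^2/2 + (F r + P r/r)) > 0"
  proof -
    assume S: "S = v - sqrt (P' r)"
    define K where "K = (r  *  sqrt (P' r))^2"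
    have vS: "v - S = sqrt (P' r)" using S by simp
    have yS: "y - S = r  *  sqrt (P' r) / s" using h vS sp by (simp add: field_simps)
    have e1: "(v-S)^2/2 = K/(2 * r^2)" unfolding K_def vS using rs by (simp add: power_mult_distrib)
    have e2: "(y-S)^2/2 = K/(2 * s^2)" unfolding K_def yS using sp by (simp add: power_divide)
    show ?thesis using ana(2)[OF dP pP dF mono rs K_def] unfolding e1 e2 by simp
  qed
qed

theorem mainTheorem4:
  fixes p \<phi> :: "nat \<Rightarrow> real \<Rightarrow> real" and Wm Wp :: state and S :: real and \<nu> :: nat
  assumes p_smooth: "\<And>i. i \<in> {1,2} \<Longrightarrow> smooth_on {0<..} (p i)"
    and p_incr: "\<And>i r. i \<in> {1,2} \<Longrightarrow> r > 0 \<Longrightarrow> deriv (p i) r > 0"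
    and phi_anti: "\<And>i r. i \<in> {1,2} \<Longrightarrow> r > 0 \<Longrightarrow>
                      (\<phi> i has_real_derivative p i r / r ^ 2) (at r)"
    and alpha_m: "0 < alph Wm 1" "alph Wm 1 < 1"
    and alpha_p: "0 < alph Wp 1" "alph Wp 1 < 1"
    and rho_m: "rh Wm 1 > 0" "rh Wm 2 > 0"
    and rho_p: "rh Wp 1 > 0" "rh Wp 2 > 0"
    and RH1: "jump (\<lambda>W. alph W 1  *  rho W  *  umix W) Wm Wp = S  *  jump (\<lambda>W. alph W 1  *  rho W) Wm Wp"
    and RH2: "jump (\<lambda>W. alph W 1  *  rh W 1  *  vel W 1) Wm Wp = S  *  jump (\<lambda>W. alph W 1  *  rh W 1) Wm Wp"
    and RH3: "jump (\<lambda>W. rho W  *  umix W) Wm Wp = S  *  jump rho Wm Wp"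
    and RH4: "jump (\<lambda>W. alph W 1  *  rh W 1  *  vel W 1 ^ 2 + alph W 2  *  rh W 2  *  vel W 2 ^ 2
                        + alph W 1  *  p 1 (rh W 1) + alph W 2  *  p 2 (rh W 2)) Wm Wp
              = S  *  jump (\<lambda>W. alph W 1  *  rh W 1  *  vel W 1 + alph W 2  *  rh W 2  *  vel W 2) Wm Wp"
    and RH5: "jump (\<lambda>W. (vel W 1 ^ 2 - vel W 2 ^ 2) / 2 + Psi p \<phi> 1 (rh W 1) - Psi p \<phi> 2 (rh W 2)) Wm Wp
              = S  *  jump (\<lambda>W. vel W 1 - vel W 2) Wm Wp"
    and Qneg: "- rho Wm  *  (umix Wm - S) < 0"
    and nu: "\<nu> \<in> {1,2}"
    and mono: "strict_mono_on {0<..} (\<lambda>r. r  *  sound p \<nu> r)"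
    and rho_nu: "rh Wm \<nu> < rh Wp \<nu>"
  shows "(S = vel Wp \<nu> - sound p \<nu> (rh Wp \<nu>) \<longrightarrow> dissip p \<phi> S Wm Wp < 0)
       \<and> (S = vel Wm \<nu> - sound p \<nu> (rh Wm \<nu>) \<longrightarrow> dissip p \<phi> S Wm Wp > 0)"
proof -
  obtain a r1 r2 v1 v2 where Wm: "Wm = (a,r1,r2,v1,v2)" by (cases Wm) auto
  obtain b s1 s2 y1 y2 where Wp: "Wp = (b,s1,s2,y1,y2)" by (cases Wp) auto
  have dP: "(p i has_real_derivative deriv (p i) r) (at r)" if "i \<in> {1,2}" "r > 0" for i r
  proof -
    have "p i differentiable (at r)" using p_smooth[OF that(1)] that(2) unfolding smooth_on_def
      by (metis funpow_0 greaterThan_iff)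
    thus ?thesis using DERIV_deriv_iff_real_differentiable by blast
  qed
  have pos: "0 < a" "a < 1" "0 < b" "b < 1" "r1 > 0" "r2 > 0" "s1 > 0" "s2 > 0"
    using alpha_m alpha_p rho_m rho_p by (simp_all add: Wm Wp alph_def rh_def)
  have rhom: "rho Wm = a * r1 + (1-a) * r2" and rhop: "rho Wp = b * s1 + (1-b) * s2"
    by (simp_all add: Wm Wp rho_def alph_def rh_def)
  have Rmpos: "rho Wm > 0" using pos rhom by (smt (verit) mult_pos_pos)
  have Rppos: "rho Wp > 0" using pos rhop by (smt (verit) mult_pos_pos)
  have um: "rho Wm  *  umix Wm = a * r1 * v1 + (1-a) * r2 * v2"
    using Rmpos by (simp add: umix_def cfrac_def Wm alph_def rh_def vel_def field_simps)
  have up: "rho Wp  *  umix Wp = b * s1 * y1 + (1-b) * s2 * y2"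
    using Rppos by (simp add: umix_def cfrac_def Wp alph_def rh_def vel_def field_simps)
  define M where "M = rho Wm  *  (umix Wm - S)"
  have Mpos: "M > 0" using Qneg unfolding M_def by simp
  have r3: "rho Wp  *  (umix Wp - S) = M"
    using RH3 unfolding jump_def M_def by (simp add: algebra_simps)
  have r1': "b  *  (rho Wp  *  (umix Wp - S)) = a  *  M"
    using RH1 unfolding jump_def M_def by (simp add: Wm Wp alph_def algebra_simps)
  have ab: "b = a" using r1' r3 Mpos by simp
  have r2': "a * s1 * y1 - a * r1 * v1 = S * (a * s1 - a * r1)"
    using RH2 unfolding jump_def by (simp add: Wm Wp ab alph_def rh_def vel_def)
  have h1: "r1 * (v1-S) = s1 * (y1-S)"
  proof -
    have "a * (r1 * (v1-S)) = a * (s1 * (y1-S))" using r2' by (simp add: algebra_simps)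
    thus ?thesis using pos by simp
  qed
  have h2: "r2 * (v2-S) = s2 * (y2-S)"
  proof -
    have "(b * s1 * y1 + (1-b) * s2 * y2) - (a * r1 * v1 + (1-a) * r2 * v2) = S * ((b * s1 + (1-b) * s2) - (a * r1 + (1-a) * r2))"
    proof -
      have "rho Wp * umix Wp - rho Wm * umix Wm = S * (rho Wp - rho Wm)" using RH3 by (simp add: jump_def)
      thus ?thesis unfolding um up unfolding rhom rhop .
    qed
    hence "(1-a) * (r2 * (v2-S)) = (1-a) * (s2 * (y2-S))" using r2' unfolding ab by (simp add: algebra_simps)
    thus ?thesis using pos by simp
  qed
  have h4: "a * (s1 * y1^2 - r1 * v1^2) + (1-a) * (s2 * y2^2 - r2 * v2^2) + a * (p 1 s1 - p 1 r1) + (1-a) * (p 2 s2 - p 2 r2)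
           = S * (a * (s1 * y1 - r1 * v1) + (1-a) * (s2 * y2 - r2 * v2))"
    using RH4 unfolding jump_def by (simp add: Wm Wp ab alph_def rh_def vel_def algebra_simps)
  have h5: "(y1^2-y2^2)/2 + (\<phi> 1 s1 + p 1 s1/s1) - (\<phi> 2 s2 + p 2 s2/s2) - ((v1^2-v2^2)/2 + (\<phi> 1 r1 + p 1 r1/r1) - (\<phi> 2 r2 + p 2 r2/r2)) = S * ((y1-y2)-(v1-v2))"
    using RH5 unfolding jump_def by (simp add: Wm Wp alph_def rh_def vel_def Psi_def)
  have Meq: "M = a * r1 * (v1-S) + (1-a) * r2 * (v2-S)"
    unfolding M_def using um by (simp add: rhom algebra_simps)
  have D: "dissip p \<phi> S Wm Wp = (-S * (a * s1 * (\<phi> 1 s1 + y1^2/2) - a * r1 * (\<phi> 1 r1+v1^2/2)) + (a * s1 * y1 * ((\<phi> 1 s1 + p 1 s1/s1) + y1^2/2) - a * r1 * v1 * ((\<phi> 1 r1+p 1 r1/r1)+v1^2/2)))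
       + (-S * ((1-a) * s2 * (\<phi> 2 s2 + y2^2/2) - (1-a) * r2 * (\<phi> 2 r2+v2^2/2)) + ((1-a) * s2 * y2 * ((\<phi> 2 s2 + p 2 s2/s2) + y2^2/2) - (1-a) * r2 * v2 * ((\<phi> 2 r2+p 2 r2/r2)+v2^2/2)))"
    unfolding dissip_def jump_def by (simp add: Wm Wp ab alph_def rh_def vel_def Psi_def)
  note A = alg[OF pos(5-8) h1 h2 h4 h5, folded Meq D]
  define E1 where "E1 = ((y1-S)^2/2 + (\<phi> 1 s1 + p 1 s1/s1)) - ((v1-S)^2/2 + (\<phi> 1 r1 + p 1 r1/r1))"
  define E2 where "E2 = ((y2-S)^2/2 + (\<phi> 2 s2 + p 2 s2/s2)) - ((v2-S)^2/2 + (\<phi> 2 r2 + p 2 r2/r2))"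
  have DE: "dissip p \<phi> S Wm Wp = M  *  E1" "dissip p \<phi> S Wm Wp = M  *  E2"
    using A unfolding E1_def E2_def by auto
  have monoi: "strict_mono_on {0<..} (\<lambda>r. r  *  sqrt (deriv (p \<nu>) r))" using mono unfolding sound_def .
  show ?thesis
  proof (cases "\<nu> = 1")
    case True
    have rs: "r1 < s1" using rho_nu True by (simp add: Wm Wp rh_def)
    note ph = phase[of "p 1" "deriv (p 1)" "\<phi> 1", OF dP p_incr phi_anti monoi[unfolded True] pos(5) rs h1]
    show ?thesis using ph DE(1) Mpos True unfolding E1_def
      by (auto simp: Wm Wp vel_def rh_def sound_def mult_pos_neg)
  next
    case False
    hence nu2: "\<nu> = 2" using nu by simp
    have rs: "r2 < s2" using rho_nu nu2 by (simp add: Wm Wp rh_def)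
    note ph = phase[of "p 2" "deriv (p 2)" "\<phi> 2", OF dP p_incr phi_anti monoi[unfolded nu2] pos(6) rs h2]
    show ?thesis using ph DE(2) Mpos nu2 unfolding E2_def
      by (auto simp: Wm Wp vel_def rh_def sound_def mult_pos_neg)
  qed
qed

end
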